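(* Let $(\bar u,\bar v;\mu)$ and $(\bar u',\bar v';\mu')$ be two stable outcomes of a non-degenerate RiFle assignment game. Suppose $p_i\stackrel{\mu}{\longleftrightarrow}q_j$, $u_i=u'_i$ (so $p_i$ is indifferent between the two outcomes) and $v_j>v'_j$ (so $q_j$ strictly prefers $\mu$). Then $q_j$ is rigid. Symmetrically, if $p_i\stackrel{\mu}{\longleftrightarrow}q_j$, $v_j=v'_j$ and $u_i>u'_i$, then $p_i$ is rigid. (That is, an agent indifferent between the two outcomes cannot be preferred by a flexible agent.)
   Context: A RiFle assignment game consists of two disjoint sets of agents $P=\{p_1,\dots,p_n\}$ and $Q=\{q_1,\dots,q_n\}$, a pair of nonnegative real numbers $(\beta_{ij},\gamma_{ij})$ for every pair $(p_i,q_j)\in P\times Q$ (write $\alpha_{ij}=\beta_{ij}+\gamma_{ij}$), and a designation of every agent as rigid or flexible. Let $\mathcal R$ be the set of pairs with at least one rigid agent and $\mathcal F$ the set of pairs with both agents flexible. An outcome $(\bar u,\bar v;\mu)$ consists of a matching $\mu$ between $P$ and $Q$ (write $p_i\stackrel{\mu}{\longleftrightarrow} q_j$) and payoff vectors $\bar u,\bar v\in\mathbb R^n$. It is feasible if: (1) $u_i\ge0$, $v_j\ge0$; (2) if a rigid $p_i$ is matched to $q_j$ then $u_i=\beta_{ij}$ and, if $q_j$ is flexible, $v_j\ge\gamma_{ij}$; symmetrically for a rigid $q_j$ matched to $p_i$: $v_j=\gamma_{ij}$ and, if $p_i$ is flexible, $u_i\ge\beta_{ij}$; (3) $\sum_iu_i+\sum_jv_j=\sum_{p_i\stackrel{\mu}{\longleftrightarrow}q_j}\alpha_{ij}$.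 It is stable if feasible and $u_i+v_j\ge\alpha_{ij}$ for $(p_i,q_j)\in\mathcal F$ and ($u_i\ge\beta_{ij}$ or $v_j\ge\gamma_{ij}$) for $(p_i,q_j)\in\mathcal R$. Reservation prices are modeled by rigid dummy agents; for the following definition an agent left unmatched by a matching is regarded as matched to a rigid dummy agent. Given a coalition $C\subseteq P\cup Q$ and a matching $\mu$, the total payoff to $C$ under $\mu$ is forced if every pair matched under $\mu$ with one agent in $C$ and the other outside $C$ contains a rigid agent; the forced payoff is then $\sum_{p_i\in C,\ p_i\stackrel{\mu}{\longleftrightarrow}q_j}\beta_{ij}+\sum_{q_j\in C,\ p_i\stackrel{\mu}{\longleftrightarrow}q_j}\gamma_{ij}$. The game is non-degenerate if for any two matchings $\mu,\mu'$: whenever $C$ is a minimal coalition such that the payoff to $C$ is forced under both $\mu$ and $\mu'$, and the two forced payoffs are equal, then $\mu$ and $\mu'$ coincide on $C$. *)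

theory Defs
  imports Complex_Main
begin

text \<open>Agents p_0..p_{n-1} and q_0..q_{n-1} are indexed by {..<n}.
  beta i j, gamma i j are the pair values; rP i / rQ j say whether p_i / q_j is rigid.
  A matching is a perfect matching, i.e. a bijection sigma of {..<n}: p_i is matched to q_(sigma i).
  Payoffs u, v are functions nat => real (only indices below n matter).\<close>

definition rifle_game :: "nat \<Rightarrow> (nat \<Rightarrow> nat \<Rightarrow> real) \<Rightarrow> (nat \<Rightarrow> nat \<Rightarrow> real) \<Rightarrow> bool" where
  "rifle_game n beta gamma \<longleftrightarrow> (\<forall>i<n. \<forall>j<n. 0 \<le> beta i j \<and> 0 \<le> gamma i j)"

definition is_matching :: "nat \<Rightarrow> (nat \<Rightarrow> nat) \<Rightarrow> bool" where
  "is_matching n \<sigma> \<longleftrightarrow> bij_betw \<sigma> {..<n} {..<n}"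

definition partnerQ :: "nat \<Rightarrow> (nat \<Rightarrow> nat) \<Rightarrow> nat \<Rightarrow> nat" where
  "partnerQ n \<sigma> j = inv_into {..<n} \<sigma> j"

definition feasible ::
  "nat \<Rightarrow> (nat \<Rightarrow> nat \<Rightarrow> real) \<Rightarrow> (nat \<Rightarrow> nat \<Rightarrow> real) \<Rightarrow> (nat \<Rightarrow> bool) \<Rightarrow> (nat \<Rightarrow> bool)
   \<Rightarrow> (nat \<Rightarrow> real) \<Rightarrow> (nat \<Rightarrow> real) \<Rightarrow> (nat \<Rightarrow> nat) \<Rightarrow> bool" where
  "feasible n beta gamma rP rQ u v \<sigma> \<longleftrightarrow>
     is_matching n \<sigma> \<and>
     (\<forall>i<n. 0 \<le> u i) \<and> (\<forall>j<n. 0 \<le> v j) \<and>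
     (\<forall>i<n. rP i \<longrightarrow> u i = beta i (\<sigma> i) \<and> (\<not> rQ (\<sigma> i) \<longrightarrow> v (\<sigma> i) \<ge> gamma i (\<sigma> i))) \<and>
     (\<forall>i<n. rQ (\<sigma> i) \<longrightarrow> v (\<sigma> i) = gamma i (\<sigma> i) \<and> (\<not> rP i \<longrightarrow> u i \<ge> beta i (\<sigma> i))) \<and>
     (\<Sum>i<n. u i) + (\<Sum>j<n. v j) = (\<Sum>i<n. beta i (\<sigma> i) + gamma i (\<sigma> i))"

definition stable ::
  "nat \<Rightarrow> (nat \<Rightarrow> nat \<Rightarrow> real) \<Rightarrow> (nat \<Rightarrow> nat \<Rightarrow> real) \<Rightarrow> (nat \<Rightarrow> bool) \<Rightarrow> (nat \<Rightarrow> bool)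
   \<Rightarrow> (nat \<Rightarrow> real) \<Rightarrow> (nat \<Rightarrow> real) \<Rightarrow> (nat \<Rightarrow> nat) \<Rightarrow> bool" where
  "stable n beta gamma rP rQ u v \<sigma> \<longleftrightarrow>
     feasible n beta gamma rP rQ u v \<sigma> \<and>
     (\<forall>i<n. \<forall>j<n. \<not> rP i \<and> \<not> rQ j \<longrightarrow> u i + v j \<ge> beta i j + gamma i j) \<and>
     (\<forall>i<n. \<forall>j<n. rP i \<or> rQ j \<longrightarrow> u i \<ge> beta i j \<or> v j \<ge> gamma i j)"

definition coalition :: "nat \<Rightarrow> nat set \<Rightarrow> nat set \<Rightarrow> bool" where
  "coalition n CP CQ \<longleftrightarrow> CP \<subseteq> {..<n} \<and> CQ \<subseteq> {..<n}"

definition forced :: "nat \<Rightarrow> (nat \<Rightarrow> bool) \<Rightarrow> (nat \<Rightarrow> bool) \<Rightarrow> (nat \<Rightarrow> nat) \<Rightarrow> nat set \<Rightarrow> nat set \<Rightarrow> bool" where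
  "forced n rP rQ \<sigma> CP CQ \<longleftrightarrow>
     (\<forall>i<n. (i \<in> CP) \<noteq> (\<sigma> i \<in> CQ) \<longrightarrow> rP i \<or> rQ (\<sigma> i))"

definition forced_payoff ::
  "nat \<Rightarrow> (nat \<Rightarrow> nat \<Rightarrow> real) \<Rightarrow> (nat \<Rightarrow> nat \<Rightarrow> real) \<Rightarrow> (nat \<Rightarrow> nat) \<Rightarrow> nat set \<Rightarrow> nat set \<Rightarrow> real" where
  "forced_payoff n beta gamma \<sigma> CP CQ =
     (\<Sum>i\<in>CP. beta i (\<sigma> i)) + (\<Sum>j\<in>CQ. gamma (partnerQ n \<sigma> j) j)"

definition minimal_forced_both ::
  "nat \<Rightarrow> (nat \<Rightarrow> bool) \<Rightarrow> (nat \<Rightarrow> bool) \<Rightarrow> (nat \<Rightarrow> nat) \<Rightarrow> (nat \<Rightarrow> nat) \<Rightarrow> nat set \<Rightarrow> nat set \<Rightarrow> bool" where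
  "minimal_forced_both n rP rQ \<sigma> \<sigma>' CP CQ \<longleftrightarrow>
     coalition n CP CQ \<and> (CP \<noteq> {} \<or> CQ \<noteq> {}) \<and>
     forced n rP rQ \<sigma> CP CQ \<and> forced n rP rQ \<sigma>' CP CQ \<and>
     (\<forall>DP DQ. DP \<subseteq> CP \<and> DQ \<subseteq> CQ \<and> (DP \<noteq> {} \<or> DQ \<noteq> {}) \<and> (DP, DQ) \<noteq> (CP, CQ) \<longrightarrow>
        \<not> (forced n rP rQ \<sigma> DP DQ \<and> forced n rP rQ \<sigma>' DP DQ))"

definition coincide_on :: "nat \<Rightarrow> (nat \<Rightarrow> nat) \<Rightarrow> (nat \<Rightarrow> nat) \<Rightarrow> nat set \<Rightarrow> nat set \<Rightarrow> bool" where
  "coincide_on n \<sigma> \<sigma>' CP CQ \<longleftrightarrow>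
     (\<forall>i\<in>CP. \<sigma> i = \<sigma>' i) \<and> (\<forall>j\<in>CQ. partnerQ n \<sigma> j = partnerQ n \<sigma>' j)"

definition nondegenerate ::
  "nat \<Rightarrow> (nat \<Rightarrow> nat \<Rightarrow> real) \<Rightarrow> (nat \<Rightarrow> nat \<Rightarrow> real) \<Rightarrow> (nat \<Rightarrow> bool) \<Rightarrow> (nat \<Rightarrow> bool) \<Rightarrow> bool" where
  "nondegenerate n beta gamma rP rQ \<longleftrightarrow>
     (\<forall>\<sigma> \<sigma>' CP CQ. is_matching n \<sigma> \<and> is_matching n \<sigma>' \<and>
        minimal_forced_both n rP rQ \<sigma> \<sigma>' CP CQ \<and>
        forced_payoff n beta gamma \<sigma> CP CQ = forced_payoff n beta gamma \<sigma>' CP CQ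
        \<longrightarrow> coincide_on n \<sigma> \<sigma>' CP CQ)"

end

theory Submission
  imports Defs
begin

lemma pair_eq:
  assumes st: "stable n b g rP rQ u v \<sigma>" and i: "i < n"
  shows "u i + v (\<sigma> i) = b i (\<sigma> i) + g i (\<sigma> i)"
proof -
  have bij: "bij_betw \<sigma> {..<n} {..<n}" using st by (simp add: stable_def feasible_def is_matching_def)
  have ge: "\<forall>k<n. u k + v (\<sigma> k) \<ge> b k (\<sigma> k) + g k (\<sigma> k)"
  proof (intro allI impI)
    fix k assume k: "k < n"
    have sk: "\<sigma> k < n" using bij k by (auto simp: bij_betw_def)
    have f1: "rP k \<longrightarrow> u k = b k (\<sigma> k) \<and> (\<not> rQ (\<sigma> k) \<longrightarrow> v (\<sigma> k) \<ge> g k (\<sigma> k))"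
      using st k unfolding stable_def feasible_def by blast
    have f2: "rQ (\<sigma> k) \<longrightarrow> v (\<sigma> k) = g k (\<sigma> k) \<and> (\<not> rP k \<longrightarrow> u k \<ge> b k (\<sigma> k))"
      using st k unfolding stable_def feasible_def by blast
    have f3: "\<not> rP k \<and> \<not> rQ (\<sigma> k) \<longrightarrow> u k + v (\<sigma> k) \<ge> b k (\<sigma> k) + g k (\<sigma> k)"
      using st k sk unfolding stable_def by blast
    show "u k + v (\<sigma> k) \<ge> b k (\<sigma> k) + g k (\<sigma> k)"
      using f1 f2 f3 by (cases "rP k"; cases "rQ (\<sigma> k)") auto
  qed
  have sv: "(\<Sum>j<n. v j) = (\<Sum>k<n. v (\<sigma> k))"
    using sum.reindex_bij_betw[OF bij, of v] by simp
  have tot: "(\<Sum>k<n. u k) + (\<Sum>j<n. v j) = (\<Sum>k<n. b k (\<sigma> k) + g k (\<sigma> k))"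
    using st by (simp add: stable_def feasible_def)
  have "(\<Sum>k<n. u k + v (\<sigma> k) - (b k (\<sigma> k) + g k (\<sigma> k))) = 0"
    using tot sv by (simp add: sum_subtractf sum.distrib)
  then have "\<forall>k\<in>{..<n}. u k + v (\<sigma> k) - (b k (\<sigma> k) + g k (\<sigma> k)) = 0"
    using ge by (subst (asm) sum_nonneg_eq_0_iff) auto
  then show ?thesis using i by auto
qed

lemma stable_rP: "stable n b g rP rQ u v \<sigma> \<Longrightarrow> i < n \<Longrightarrow> rP i \<Longrightarrow> u i = b i (\<sigma> i)"
  unfolding stable_def feasible_def by blast

lemma stable_rQ: "stable n b g rP rQ u v \<sigma> \<Longrightarrow> i < n \<Longrightarrow> rQ (\<sigma> i) \<Longrightarrow> v (\<sigma> i) = g i (\<sigma> i)"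
  unfolding stable_def feasible_def by blast

lemma stable_FF: "stable n b g rP rQ u v \<sigma> \<Longrightarrow> i < n \<Longrightarrow> j < n \<Longrightarrow> \<not> rP i \<Longrightarrow> \<not> rQ j
   \<Longrightarrow> u i + v j \<ge> b i j + g i j"
  unfolding stable_def by blast

lemma nd_use: "nondegenerate n b g rP rQ \<Longrightarrow> is_matching n s \<Longrightarrow> is_matching n s' \<Longrightarrow>
   minimal_forced_both n rP rQ s s' CP CQ \<Longrightarrow> forced_payoff n b g s CP CQ = forced_payoff n b g s' CP CQ
   \<Longrightarrow> coincide_on n s s' CP CQ"
  unfolding nondegenerate_def by blast

theorem lemma2:
  fixes n :: nat and beta gamma :: "nat \<Rightarrow> nat \<Rightarrow> real" and rP rQ :: "nat \<Rightarrow> bool"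
    and u v u' v' :: "nat \<Rightarrow> real" and \<sigma> \<sigma>' :: "nat \<Rightarrow> nat" and i j :: nat
  assumes game: "rifle_game n beta gamma"
    and nd: "nondegenerate n beta gamma rP rQ"
    and st: "stable n beta gamma rP rQ u v \<sigma>"
    and st': "stable n beta gamma rP rQ u' v' \<sigma>'"
    and i: "i < n" and matched: "\<sigma> i = j"
  shows "(u i = u' i \<and> v j > v' j \<longrightarrow> rQ j) \<and> (v j = v' j \<and> u i > u' i \<longrightarrow> rP i)"
proof -
  have bij: "bij_betw \<sigma> {..<n} {..<n}" using st by (simp add: stable_def feasible_def is_matching_def)
  have bij': "bij_betw \<sigma>' {..<n} {..<n}" using st' by (simp add: stable_def feasible_def is_matching_def)
  have m: "is_matching n \<sigma>" "is_matching n \<sigma>'" using bij bij' by (simp_all add: is_matching_def)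
  have j: "j < n" using bij i matched by (auto simp: bij_betw_def)
  have k: "\<sigma>' i < n" using bij' i by (auto simp: bij_betw_def)
  have pe: "u i + v j = beta i j + gamma i j" using pair_eq[OF st i] matched by simp
  have pe': "u' i + v' (\<sigma>' i) = beta i (\<sigma>' i) + gamma i (\<sigma>' i)" using pair_eq[OF st' i] by simp
  have ff: "\<not> rP i \<Longrightarrow> \<not> rQ j \<Longrightarrow> u' i + v' j \<ge> beta i j + gamma i j"
    using stable_FF[OF st' i j] by simp
  have A: "rQ j" if h: "u i = u' i" "v j > v' j"
  proof (rule ccontr)
    assume nq: "\<not> rQ j"
    show False
    proof (cases "rP i")
      case False then show False using ff nq pe h by linarith
    next
      case True
      have ui: "u i = beta i j" using stable_rP[OF st i True] matched by simp
      have ui': "u' i = beta i (\<sigma>' i)" using stable_rP[OF st' i True] by simp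
      have fo: "forced n rP rQ s {i} {}" for s using True by (auto simp: forced_def)
      have mf: "minimal_forced_both n rP rQ \<sigma> \<sigma>' {i} {}"
        using fo i unfolding minimal_forced_both_def coalition_def
        by (auto simp: subset_singleton_iff)
      have "forced_payoff n beta gamma \<sigma> {i} {} = forced_payoff n beta gamma \<sigma>' {i} {}"
        using ui ui' h matched by (simp add: forced_payoff_def)
      then have "coincide_on n \<sigma> \<sigma>' {i} {}" using nd_use[OF nd m mf] by blast
      then have "\<sigma>' i = j" using matched by (simp add: coincide_on_def)
      then show False using pe pe' h ui ui' by simp
    qed
  qed
  have B: "rP i" if h: "v j = v' j" "u i > u' i"
  proof (rule ccontr)
    assume np: "\<not> rP i"
    show False
    proof (cases "rQ j")
      case False then show False using ff np pe h by linarith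
    next
      case True
      have pq: "partnerQ n \<sigma> j = i" unfolding partnerQ_def
        using bij_betw_inv_into_left[OF bij, of i] i matched by simp
      have jr: "j \<in> \<sigma>' ` {..<n}" using bij' j by (simp add: bij_betw_def)
      define l where "l = partnerQ n \<sigma>' j"
      have l: "l < n" "\<sigma>' l = j" unfolding l_def partnerQ_def
        using inv_into_into[OF jr] f_inv_into_f[OF jr] by auto
      have vj: "v j = gamma i j" using stable_rQ[OF st i] True matched by simp
      have vj': "v' j = gamma l j" using stable_rQ[OF st' l(1)] True l(2) by simp
      have fo: "forced n rP rQ s {} {j}" for s using True by (auto simp: forced_def)
      have mf: "minimal_forced_both n rP rQ \<sigma> \<sigma>' {} {j}"
        using fo j unfolding minimal_forced_both_def coalition_def
        by (auto simp: subset_singleton_iff)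
      have "forced_payoff n beta gamma \<sigma> {} {j} = forced_payoff n beta gamma \<sigma>' {} {j}"
        using vj vj' h pq l_def by (simp add: forced_payoff_def)
      then have "coincide_on n \<sigma> \<sigma>' {} {j}" using nd_use[OF nd m mf] by blast
      then have "l = i" using pq l_def by (simp add: coincide_on_def)
      then have "\<sigma>' i = j" using l by simp
      then show False using pe pe' h vj vj' \<open>l = i\<close> by simp
    qed
  qed
  show ?thesis using A B by blast
qed

end
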